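(* Let $F:\mathcal{A}\to \mathcal{B}$ be a fully faithful (additive) covariant functor between abelian categories, and let $M$ and $N$ be objects of $\mathcal{A}$. (1) Assume that $F$ is left exact. Then $N$ is strongly $M$-Rickart in $\mathcal{A}$ if and only if $F(N)$ is strongly $F(M)$-Rickart in $\mathcal{B}$. (2) Assume that $F$ is right exact. Then $N$ is dual strongly $M$-Rickart in $\mathcal{A}$ if and only if $F(N)$ is dual strongly $F(M)$-Rickart in $\mathcal{B}$.
   Context: A morphism $f:X\to Y$ is a section if $f'f=1_X$ for some $f'$, a retraction if $ff'=1_Y$ for some $f'$. A monomorphism $k:K\to X$ is fully invariant if for every $h:X\to X$ there is $\alpha:K\to K$ with $hk=k\alpha$; an epimorphism $c:X\to C$ is fully coinvariant if for every $h:X\to X$ there is $\gamma:C\to C$ with $ch=\gamma c$. For objects $M,N$: $N$ is strongly $M$-Rickart if the kernel of every morphism $f:M\to N$ is a fully invariant section; $N$ is dual strongly $M$-Rickart if the cokernel of every morphism $f:M\to N$ is a fully coinvariant retraction. *)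

theory Defs
  imports Main
begin

text \<open>A category with explicit object set and arrow set; each arrow has a domain
and codomain; cat_comp C g f is the composite "g after f".\<close>

record ('o, 'm) cat =
  cat_obj  :: "'o set"
  cat_arr  :: "'m set"
  cat_dom  :: "'m \<Rightarrow> 'o"
  cat_cod  :: "'m \<Rightarrow> 'o"
  cat_comp :: "'m \<Rightarrow> 'm \<Rightarrow> 'm"
  cat_id   :: "'o \<Rightarrow> 'm"
  cat_add  :: "'m \<Rightarrow> 'm \<Rightarrow> 'm"
  cat_zero :: "'o \<Rightarrow> 'o \<Rightarrow> 'm"
  cat_neg  :: "'m \<Rightarrow> 'm"

definition hom :: "('o, 'm) cat \<Rightarrow> 'o \<Rightarrow> 'o \<Rightarrow> 'm set" where
  "hom C a b = {f \<in> cat_arr C. cat_dom C f = a \<and> cat_cod C f = b}"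

definition is_category :: "('o, 'm) cat \<Rightarrow> bool" where
  "is_category C \<longleftrightarrow>
     (\<forall>f \<in> cat_arr C. cat_dom C f \<in> cat_obj C \<and> cat_cod C f \<in> cat_obj C) \<and>
     (\<forall>a \<in> cat_obj C. cat_id C a \<in> hom C a a) \<and>
     (\<forall>a \<in> cat_obj C. \<forall>b \<in> cat_obj C. \<forall>c \<in> cat_obj C. \<forall>f \<in> hom C a b. \<forall>g \<in> hom C b c.
        cat_comp C g f \<in> hom C a c) \<and>
     (\<forall>a \<in> cat_obj C. \<forall>b \<in> cat_obj C. \<forall>c \<in> cat_obj C. \<forall>d \<in> cat_obj C.
        \<forall>f \<in> hom C a b. \<forall>g \<in> hom C b c. \<forall>h \<in> hom C c d.
        cat_comp C h (cat_comp C g f) = cat_comp C (cat_comp C h g) f) \<and>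
     (\<forall>a \<in> cat_obj C. \<forall>b \<in> cat_obj C. \<forall>f \<in> hom C a b.
        cat_comp C f (cat_id C a) = f \<and> cat_comp C (cat_id C b) f = f)"

definition is_preadditive :: "('o, 'm) cat \<Rightarrow> bool" where
  "is_preadditive C \<longleftrightarrow> is_category C \<and>
     (\<forall>a \<in> cat_obj C. \<forall>b \<in> cat_obj C.
        cat_zero C a b \<in> hom C a b \<and>
        (\<forall>f \<in> hom C a b. \<forall>g \<in> hom C a b. cat_add C f g \<in> hom C a b) \<and>
        (\<forall>f \<in> hom C a b. cat_neg C f \<in> hom C a b) \<and>
        (\<forall>f \<in> hom C a b. \<forall>g \<in> hom C a b. \<forall>h \<in> hom C a b.
           cat_add C (cat_add C f g) h = cat_add C f (cat_add C g h)) \<and>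
        (\<forall>f \<in> hom C a b. \<forall>g \<in> hom C a b. cat_add C f g = cat_add C g f) \<and>
        (\<forall>f \<in> hom C a b. cat_add C f (cat_zero C a b) = f) \<and>
        (\<forall>f \<in> hom C a b. cat_add C f (cat_neg C f) = cat_zero C a b)) \<and>
     (\<forall>a \<in> cat_obj C. \<forall>b \<in> cat_obj C. \<forall>c \<in> cat_obj C.
        (\<forall>f \<in> hom C a b. \<forall>g \<in> hom C b c. \<forall>g' \<in> hom C b c.
           cat_comp C (cat_add C g g') f = cat_add C (cat_comp C g f) (cat_comp C g' f)) \<and>
        (\<forall>f \<in> hom C a b. \<forall>f' \<in> hom C a b. \<forall>g \<in> hom C b c.
           cat_comp C g (cat_add C f f') = cat_add C (cat_comp C g f) (cat_comp C g f')))"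

definition is_zero_object :: "('o, 'm) cat \<Rightarrow> 'o \<Rightarrow> bool" where
  "is_zero_object C z \<longleftrightarrow> z \<in> cat_obj C \<and>
     (\<forall>a \<in> cat_obj C. (\<exists>!f. f \<in> hom C z a) \<and> (\<exists>!f. f \<in> hom C a z))"

definition is_biproduct ::
    "('o, 'm) cat \<Rightarrow> 'o \<Rightarrow> 'o \<Rightarrow> 'o \<Rightarrow> 'm \<Rightarrow> 'm \<Rightarrow> 'm \<Rightarrow> 'm \<Rightarrow> bool" where
  "is_biproduct C a b p i1 i2 p1 p2 \<longleftrightarrow> p \<in> cat_obj C \<and>
     i1 \<in> hom C a p \<and> i2 \<in> hom C b p \<and> p1 \<in> hom C p a \<and> p2 \<in> hom C p b \<and>
     cat_comp C p1 i1 = cat_id C a \<and> cat_comp C p2 i2 = cat_id C b \<and>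
     cat_comp C p1 i2 = cat_zero C b a \<and> cat_comp C p2 i1 = cat_zero C a b \<and>
     cat_add C (cat_comp C i1 p1) (cat_comp C i2 p2) = cat_id C p"

definition is_additive_cat :: "('o, 'm) cat \<Rightarrow> bool" where
  "is_additive_cat C \<longleftrightarrow> is_preadditive C \<and>
     (\<exists>z. is_zero_object C z) \<and>
     (\<forall>a \<in> cat_obj C. \<forall>b \<in> cat_obj C. \<exists>p i1 i2 p1 p2. is_biproduct C a b p i1 i2 p1 p2)"

definition is_mono :: "('o, 'm) cat \<Rightarrow> 'm \<Rightarrow> bool" where
  "is_mono C k \<longleftrightarrow> k \<in> cat_arr C \<and>
     (\<forall>x \<in> cat_obj C. \<forall>g \<in> hom C x (cat_dom C k). \<forall>h \<in> hom C x (cat_dom C k).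
        cat_comp C k g = cat_comp C k h \<longrightarrow> g = h)"

definition is_epi :: "('o, 'm) cat \<Rightarrow> 'm \<Rightarrow> bool" where
  "is_epi C c \<longleftrightarrow> c \<in> cat_arr C \<and>
     (\<forall>x \<in> cat_obj C. \<forall>g \<in> hom C (cat_cod C c) x. \<forall>h \<in> hom C (cat_cod C c) x.
        cat_comp C g c = cat_comp C h c \<longrightarrow> g = h)"

definition is_kernel :: "('o, 'm) cat \<Rightarrow> 'm \<Rightarrow> 'm \<Rightarrow> bool" where
  "is_kernel C f k \<longleftrightarrow> f \<in> cat_arr C \<and> k \<in> cat_arr C \<and>
     cat_cod C k = cat_dom C f \<and>
     cat_comp C f k = cat_zero C (cat_dom C k) (cat_cod C f) \<and>
     (\<forall>x \<in> cat_obj C. \<forall>g \<in> hom C x (cat_dom C f).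
        cat_comp C f g = cat_zero C x (cat_cod C f) \<longrightarrow>
        (\<exists>!u. u \<in> hom C x (cat_dom C k) \<and> cat_comp C k u = g))"

definition is_cokernel :: "('o, 'm) cat \<Rightarrow> 'm \<Rightarrow> 'm \<Rightarrow> bool" where
  "is_cokernel C f c \<longleftrightarrow> f \<in> cat_arr C \<and> c \<in> cat_arr C \<and>
     cat_dom C c = cat_cod C f \<and>
     cat_comp C c f = cat_zero C (cat_dom C f) (cat_cod C c) \<and>
     (\<forall>x \<in> cat_obj C. \<forall>g \<in> hom C (cat_cod C f) x.
        cat_comp C g f = cat_zero C (cat_dom C f) x \<longrightarrow>
        (\<exists>!u. u \<in> hom C (cat_cod C c) x \<and> cat_comp C u c = g))"

definition is_abelian :: "('o, 'm) cat \<Rightarrow> bool" where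
  "is_abelian C \<longleftrightarrow> is_additive_cat C \<and>
     (\<forall>f \<in> cat_arr C. (\<exists>k. is_kernel C f k) \<and> (\<exists>c. is_cokernel C f c)) \<and>
     (\<forall>k. is_mono C k \<longrightarrow> (\<exists>f. is_kernel C f k)) \<and>
     (\<forall>c. is_epi C c \<longrightarrow> (\<exists>f. is_cokernel C f c))"

definition is_functor ::
    "('o, 'm) cat \<Rightarrow> ('p, 'n) cat \<Rightarrow> ('o \<Rightarrow> 'p) \<Rightarrow> ('m \<Rightarrow> 'n) \<Rightarrow> bool" where
  "is_functor A B Fo Fm \<longleftrightarrow>
     (\<forall>a \<in> cat_obj A. Fo a \<in> cat_obj B) \<and>
     (\<forall>a \<in> cat_obj A. \<forall>b \<in> cat_obj A. \<forall>f \<in> hom A a b. Fm f \<in> hom B (Fo a) (Fo b)) \<and>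
     (\<forall>a \<in> cat_obj A. Fm (cat_id A a) = cat_id B (Fo a)) \<and>
     (\<forall>a \<in> cat_obj A. \<forall>b \<in> cat_obj A. \<forall>c \<in> cat_obj A. \<forall>f \<in> hom A a b. \<forall>g \<in> hom A b c.
        Fm (cat_comp A g f) = cat_comp B (Fm g) (Fm f))"

definition is_additive_functor ::
    "('o, 'm) cat \<Rightarrow> ('p, 'n) cat \<Rightarrow> ('o \<Rightarrow> 'p) \<Rightarrow> ('m \<Rightarrow> 'n) \<Rightarrow> bool" where
  "is_additive_functor A B Fo Fm \<longleftrightarrow> is_functor A B Fo Fm \<and>
     (\<forall>a \<in> cat_obj A. \<forall>b \<in> cat_obj A. \<forall>f \<in> hom A a b. \<forall>g \<in> hom A a b.
        Fm (cat_add A f g) = cat_add B (Fm f) (Fm g))"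

definition fully_faithful ::
    "('o, 'm) cat \<Rightarrow> ('p, 'n) cat \<Rightarrow> ('o \<Rightarrow> 'p) \<Rightarrow> ('m \<Rightarrow> 'n) \<Rightarrow> bool" where
  "fully_faithful A B Fo Fm \<longleftrightarrow>
     (\<forall>a \<in> cat_obj A. \<forall>b \<in> cat_obj A. bij_betw Fm (hom A a b) (hom B (Fo a) (Fo b)))"

text \<open>For an additive functor between abelian categories, left exactness is
equivalent to preservation of kernels, right exactness to preservation of cokernels.\<close>
definition left_exact ::
    "('o, 'm) cat \<Rightarrow> ('p, 'n) cat \<Rightarrow> ('o \<Rightarrow> 'p) \<Rightarrow> ('m \<Rightarrow> 'n) \<Rightarrow> bool" where
  "left_exact A B Fo Fm \<longleftrightarrow>
     (\<forall>f k. is_kernel A f k \<longrightarrow> is_kernel B (Fm f) (Fm k))"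

definition right_exact ::
    "('o, 'm) cat \<Rightarrow> ('p, 'n) cat \<Rightarrow> ('o \<Rightarrow> 'p) \<Rightarrow> ('m \<Rightarrow> 'n) \<Rightarrow> bool" where
  "right_exact A B Fo Fm \<longleftrightarrow>
     (\<forall>f c. is_cokernel A f c \<longrightarrow> is_cokernel B (Fm f) (Fm c))"

definition is_section :: "('o, 'm) cat \<Rightarrow> 'm \<Rightarrow> bool" where
  "is_section C f \<longleftrightarrow> f \<in> cat_arr C \<and>
     (\<exists>f' \<in> hom C (cat_cod C f) (cat_dom C f). cat_comp C f' f = cat_id C (cat_dom C f))"

definition is_retraction :: "('o, 'm) cat \<Rightarrow> 'm \<Rightarrow> bool" where
  "is_retraction C f \<longleftrightarrow> f \<in> cat_arr C \<and>
     (\<exists>f' \<in> hom C (cat_cod C f) (cat_dom C f). cat_comp C f f' = cat_id C (cat_cod C f))"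

definition fully_invariant :: "('o, 'm) cat \<Rightarrow> 'm \<Rightarrow> bool" where
  "fully_invariant C k \<longleftrightarrow> is_mono C k \<and>
     (\<forall>h \<in> hom C (cat_cod C k) (cat_cod C k).
        \<exists>\<alpha> \<in> hom C (cat_dom C k) (cat_dom C k). cat_comp C h k = cat_comp C k \<alpha>)"

definition fully_coinvariant :: "('o, 'm) cat \<Rightarrow> 'm \<Rightarrow> bool" where
  "fully_coinvariant C c \<longleftrightarrow> is_epi C c \<and>
     (\<forall>h \<in> hom C (cat_dom C c) (cat_dom C c).
        \<exists>\<gamma> \<in> hom C (cat_cod C c) (cat_cod C c). cat_comp C c h = cat_comp C \<gamma> c)"

text \<open>N is strongly M-Rickart: the kernel of every f : M \<rightarrow> N is a fully invariant
section (kernels are unique up to isomorphism; we require it of every kernel).\<close>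
definition strongly_rickart :: "('o, 'm) cat \<Rightarrow> 'o \<Rightarrow> 'o \<Rightarrow> bool" where
  "strongly_rickart C M N \<longleftrightarrow>
     (\<forall>f \<in> hom C M N. \<forall>k. is_kernel C f k \<longrightarrow> fully_invariant C k \<and> is_section C k)"

definition dual_strongly_rickart :: "('o, 'm) cat \<Rightarrow> 'o \<Rightarrow> 'o \<Rightarrow> bool" where
  "dual_strongly_rickart C M N \<longleftrightarrow>
     (\<forall>f \<in> hom C M N. \<forall>c. is_cokernel C f c \<longrightarrow> fully_coinvariant C c \<and> is_retraction C c)"

end

theory Submission
  imports Defs
begin

lemma abelian_cat: "is_abelian C \<Longrightarrow> is_category C"
  by (simp add: is_abelian_def is_additive_cat_def is_preadditive_def)

lemma homI: "f \<in> cat_arr C \<Longrightarrow> f \<in> hom C (cat_dom C f) (cat_cod C f)"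
  by (simp add: hom_def)

lemma homD: "f \<in> hom C a b \<Longrightarrow> f \<in> cat_arr C \<and> cat_dom C f = a \<and> cat_cod C f = b"
  by (simp add: hom_def)

lemma cat_hom_obj: "is_category C \<Longrightarrow> f \<in> hom C a b \<Longrightarrow> a \<in> cat_obj C \<and> b \<in> cat_obj C"
  by (auto simp: is_category_def hom_def)

lemma cat_comp_hom: "is_category C \<Longrightarrow> f \<in> hom C a b \<Longrightarrow> g \<in> hom C b c \<Longrightarrow> cat_comp C g f \<in> hom C a c"
  using cat_hom_obj[of C f a b] cat_hom_obj[of C g b c] unfolding is_category_def by blast

lemma cat_assoc: "is_category C \<Longrightarrow> f \<in> hom C a b \<Longrightarrow> g \<in> hom C b c \<Longrightarrow> h \<in> hom C c d
  \<Longrightarrow> cat_comp C h (cat_comp C g f) = cat_comp C (cat_comp C h g) f"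
  using cat_hom_obj[of C f a b] cat_hom_obj[of C h c d] unfolding is_category_def by blast

lemma cat_id_hom: "is_category C \<Longrightarrow> a \<in> cat_obj C \<Longrightarrow> cat_id C a \<in> hom C a a"
  unfolding is_category_def by blast

lemma cat_idr: "is_category C \<Longrightarrow> f \<in> hom C a b \<Longrightarrow> cat_comp C f (cat_id C a) = f"
  using cat_hom_obj[of C f a b] unfolding is_category_def by blast

lemma cat_idl: "is_category C \<Longrightarrow> f \<in> hom C a b \<Longrightarrow> cat_comp C (cat_id C b) f = f"
  using cat_hom_obj[of C f a b] unfolding is_category_def by blast

lemma section_mono:
  assumes C: "is_category C" and s: "is_section C k"
  shows "is_mono C k"
proof -
  from s obtain r where r: "r \<in> hom C (cat_cod C k) (cat_dom C k)"
    and rk: "cat_comp C r k = cat_id C (cat_dom C k)" unfolding is_section_def by blast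
  have k: "k \<in> hom C (cat_dom C k) (cat_cod C k)" using s unfolding is_section_def hom_def by blast
  show ?thesis unfolding is_mono_def
  proof (intro conjI ballI impI)
    show "k \<in> cat_arr C" using s unfolding is_section_def by blast
    fix x g h assume g: "g \<in> hom C x (cat_dom C k)" and h: "h \<in> hom C x (cat_dom C k)"
      and e: "cat_comp C k g = cat_comp C k h"
    have "g = cat_comp C (cat_comp C r k) g" using rk cat_idl[OF C g] by simp
    also have "\<dots> = cat_comp C r (cat_comp C k g)" using cat_assoc[OF C g k r] by simp
    also have "\<dots> = cat_comp C r (cat_comp C k h)" using e by simp
    also have "\<dots> = cat_comp C (cat_comp C r k) h" using cat_assoc[OF C h k r] by simp
    also have "\<dots> = h" using rk cat_idl[OF C h] by simp
    finally show "g = h" .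
  qed
qed

lemma retraction_epi:
  assumes C: "is_category C" and s: "is_retraction C c"
  shows "is_epi C c"
proof -
  from s obtain r where r: "r \<in> hom C (cat_cod C c) (cat_dom C c)"
    and rk: "cat_comp C c r = cat_id C (cat_cod C c)" unfolding is_retraction_def by blast
  have k: "c \<in> hom C (cat_dom C c) (cat_cod C c)" using s unfolding is_retraction_def hom_def by blast
  show ?thesis unfolding is_epi_def
  proof (intro conjI ballI impI)
    show "c \<in> cat_arr C" using s unfolding is_retraction_def by blast
    fix x g h assume g: "g \<in> hom C (cat_cod C c) x" and h: "h \<in> hom C (cat_cod C c) x"
      and e: "cat_comp C g c = cat_comp C h c"
    have "g = cat_comp C g (cat_comp C c r)" using rk cat_idr[OF C g] by simp
    also have "\<dots> = cat_comp C (cat_comp C g c) r" using cat_assoc[OF C r k g] by simp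
    also have "\<dots> = cat_comp C (cat_comp C h c) r" using e by simp
    also have "\<dots> = cat_comp C h (cat_comp C c r)" using cat_assoc[OF C r k h] by simp
    also have "\<dots> = h" using rk cat_idr[OF C h] by simp
    finally show "g = h" .
  qed
qed

lemma kernel_iso:
  assumes C: "is_category C" and k1: "is_kernel C g k1" and k2: "is_kernel C g k2"
  shows "\<exists>u v. u \<in> hom C (cat_dom C k2) (cat_dom C k1) \<and> v \<in> hom C (cat_dom C k1) (cat_dom C k2)
    \<and> cat_comp C k1 u = k2 \<and> cat_comp C k2 v = k1 \<and> cat_comp C v u = cat_id C (cat_dom C k2)"
proof -
  have k1h: "k1 \<in> hom C (cat_dom C k1) (cat_dom C g)" using k1 unfolding is_kernel_def hom_def by auto
  have k2h: "k2 \<in> hom C (cat_dom C k2) (cat_dom C g)" using k2 unfolding is_kernel_def hom_def by auto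
  have o1: "cat_dom C k1 \<in> cat_obj C" using cat_hom_obj[OF C k1h] by blast
  have o2: "cat_dom C k2 \<in> cat_obj C" using cat_hom_obj[OF C k2h] by blast
  obtain u where u: "u \<in> hom C (cat_dom C k2) (cat_dom C k1)" "cat_comp C k1 u = k2"
    using k1 k2 o2 k2h unfolding is_kernel_def by metis
  obtain v where v: "v \<in> hom C (cat_dom C k1) (cat_dom C k2)" "cat_comp C k2 v = k1"
    using k1 k2 o1 k1h unfolding is_kernel_def by metis
  have vu: "cat_comp C v u \<in> hom C (cat_dom C k2) (cat_dom C k2)" using cat_comp_hom[OF C u(1) v(1)] .
  have e1: "cat_comp C k2 (cat_comp C v u) = k2" using cat_assoc[OF C u(1) v(1) k2h] u v by simp
  have idh: "cat_id C (cat_dom C k2) \<in> hom C (cat_dom C k2) (cat_dom C k2)" using cat_id_hom[OF C o2] .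
  have e2: "cat_comp C k2 (cat_id C (cat_dom C k2)) = k2" using cat_idr[OF C k2h] .
  have uniq: "\<exists>!w. w \<in> hom C (cat_dom C k2) (cat_dom C k2) \<and> cat_comp C k2 w = k2"
    using k2 o2 k2h unfolding is_kernel_def by blast
  have "cat_comp C v u = cat_id C (cat_dom C k2)" using uniq vu e1 idh e2 by blast
  thus ?thesis using u v by blast
qed

lemma cokernel_iso:
  assumes C: "is_category C" and c1: "is_cokernel C g c1" and c2: "is_cokernel C g c2"
  shows "\<exists>u v. u \<in> hom C (cat_cod C c1) (cat_cod C c2) \<and> v \<in> hom C (cat_cod C c2) (cat_cod C c1)
    \<and> cat_comp C u c1 = c2 \<and> cat_comp C v c2 = c1 \<and> cat_comp C u v = cat_id C (cat_cod C c2)"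
proof -
  have c1h: "c1 \<in> hom C (cat_cod C g) (cat_cod C c1)" using c1 unfolding is_cokernel_def hom_def by auto
  have c2h: "c2 \<in> hom C (cat_cod C g) (cat_cod C c2)" using c2 unfolding is_cokernel_def hom_def by auto
  have o1: "cat_cod C c1 \<in> cat_obj C" using cat_hom_obj[OF C c1h] by blast
  have o2: "cat_cod C c2 \<in> cat_obj C" using cat_hom_obj[OF C c2h] by blast
  obtain u where u: "u \<in> hom C (cat_cod C c1) (cat_cod C c2)" "cat_comp C u c1 = c2"
    using c1 c2 o2 c2h unfolding is_cokernel_def by metis
  obtain v where v: "v \<in> hom C (cat_cod C c2) (cat_cod C c1)" "cat_comp C v c2 = c1"
    using c1 c2 o1 c1h unfolding is_cokernel_def by metis
  have uv: "cat_comp C u v \<in> hom C (cat_cod C c2) (cat_cod C c2)" using cat_comp_hom[OF C v(1) u(1)] .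
  have e1: "cat_comp C (cat_comp C u v) c2 = c2" using cat_assoc[OF C c2h v(1) u(1)] u v by simp
  have idh: "cat_id C (cat_cod C c2) \<in> hom C (cat_cod C c2) (cat_cod C c2)" using cat_id_hom[OF C o2] .
  have e2: "cat_comp C (cat_id C (cat_cod C c2)) c2 = c2" using cat_idl[OF C c2h] .
  have uniq: "\<exists>!w. w \<in> hom C (cat_cod C c2) (cat_cod C c2) \<and> cat_comp C w c2 = c2"
    using c2 o2 c2h unfolding is_cokernel_def by blast
  have "cat_comp C u v = cat_id C (cat_cod C c2)" using uniq uv e1 idh e2 by blast
  thus ?thesis using u v by blast
qed

lemma FI_iso:
  assumes C: "is_category C" and fi: "fully_invariant C k" and s: "is_section C k"
    and k: "k \<in> hom C K X" and k': "k' \<in> hom C K' X" and u: "u \<in> hom C K' K" and v: "v \<in> hom C K K'"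
    and ku: "cat_comp C k u = k'" and kv: "cat_comp C k' v = k" and vu: "cat_comp C v u = cat_id C K'"
  shows "fully_invariant C k' \<and> is_section C k'"
proof -
  from s k obtain r where r: "r \<in> hom C X K" and rk: "cat_comp C r k = cat_id C K"
    unfolding is_section_def hom_def by auto
  have vr: "cat_comp C v r \<in> hom C X K'" using cat_comp_hom[OF C r v] .
  have "cat_comp C (cat_comp C v r) k' = cat_comp C v (cat_comp C r (cat_comp C k u))"
    using cat_assoc[OF C k' r v] ku by simp
  also have "\<dots> = cat_comp C v (cat_comp C (cat_comp C r k) u)" using cat_assoc[OF C u k r] by simp
  also have "\<dots> = cat_id C K'" using rk cat_idl[OF C u] vu by simp
  finally have sec: "is_section C k'" unfolding is_section_def using k' vr homD[OF k'] by auto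
  have mono: "is_mono C k'" using section_mono[OF C sec] .
  have inv: "\<forall>h \<in> hom C (cat_cod C k') (cat_cod C k').
        \<exists>\<alpha> \<in> hom C (cat_dom C k') (cat_dom C k'). cat_comp C h k' = cat_comp C k' \<alpha>"
  proof
    fix h assume "h \<in> hom C (cat_cod C k') (cat_cod C k')"
    hence h: "h \<in> hom C X X" using homD[OF k'] by simp
    then obtain \<alpha> where a: "\<alpha> \<in> hom C K K" and ha: "cat_comp C h k = cat_comp C k \<alpha>"
      using fi homD[OF k] unfolding fully_invariant_def by auto
    have au: "cat_comp C \<alpha> u \<in> hom C K' K" using cat_comp_hom[OF C u a] .
    have b: "cat_comp C v (cat_comp C \<alpha> u) \<in> hom C K' K'" using cat_comp_hom[OF C au v] .
    have "cat_comp C k' (cat_comp C v (cat_comp C \<alpha> u)) = cat_comp C (cat_comp C k' v) (cat_comp C \<alpha> u)"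
      using cat_assoc[OF C au v k'] .
    also have "\<dots> = cat_comp C (cat_comp C k \<alpha>) u" using kv cat_assoc[OF C u a k] by simp
    also have "\<dots> = cat_comp C h k'" using ha cat_assoc[OF C u k h] ku by simp
    finally show "\<exists>\<alpha> \<in> hom C (cat_dom C k') (cat_dom C k'). cat_comp C h k' = cat_comp C k' \<alpha>"
      using b homD[OF k'] by metis
  qed
  show ?thesis using sec mono inv unfolding fully_invariant_def by blast
qed

lemma FC_iso:
  assumes C: "is_category C" and fi: "fully_coinvariant C c" and s: "is_retraction C c"
    and c: "c \<in> hom C X Q" and c': "c' \<in> hom C X Q'" and u: "u \<in> hom C Q Q'" and v: "v \<in> hom C Q' Q"
    and uc: "cat_comp C u c = c'" and vc: "cat_comp C v c' = c" and uv: "cat_comp C u v = cat_id C Q'"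
  shows "fully_coinvariant C c' \<and> is_retraction C c'"
proof -
  from s c obtain r where r: "r \<in> hom C Q X" and rk: "cat_comp C c r = cat_id C Q"
    unfolding is_retraction_def hom_def by auto
  have rv: "cat_comp C r v \<in> hom C Q' X" using cat_comp_hom[OF C v r] .
  have "cat_comp C c' (cat_comp C r v) = cat_comp C (cat_comp C (cat_comp C u c) r) v"
    using cat_assoc[OF C v r c'] uc by simp
  also have "\<dots> = cat_comp C (cat_comp C u (cat_comp C c r)) v" using cat_assoc[OF C r c u] by simp
  also have "\<dots> = cat_id C Q'" using rk cat_idr[OF C u] uv by simp
  finally have sec: "is_retraction C c'" unfolding is_retraction_def using c' rv homD[OF c'] by auto
  have epi: "is_epi C c'" using retraction_epi[OF C sec] .
  have inv: "\<forall>h \<in> hom C (cat_dom C c') (cat_dom C c').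
        \<exists>\<gamma> \<in> hom C (cat_cod C c') (cat_cod C c'). cat_comp C c' h = cat_comp C \<gamma> c'"
  proof
    fix h assume "h \<in> hom C (cat_dom C c') (cat_dom C c')"
    hence h: "h \<in> hom C X X" using homD[OF c'] by simp
    then obtain \<gamma> where a: "\<gamma> \<in> hom C Q Q" and ha: "cat_comp C c h = cat_comp C \<gamma> c"
      using fi homD[OF c] unfolding fully_coinvariant_def by auto
    have ga: "cat_comp C \<gamma> v \<in> hom C Q' Q" using cat_comp_hom[OF C v a] .
    have b: "cat_comp C u (cat_comp C \<gamma> v) \<in> hom C Q' Q'" using cat_comp_hom[OF C ga u] .
    have "cat_comp C (cat_comp C u (cat_comp C \<gamma> v)) c' = cat_comp C u (cat_comp C (cat_comp C \<gamma> v) c')"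
      using cat_assoc[OF C c' ga u] by simp
    also have "\<dots> = cat_comp C u (cat_comp C \<gamma> c)" using vc cat_assoc[OF C c' v a] by simp
    also have "\<dots> = cat_comp C c' h" using ha cat_assoc[OF C h c u] uc by simp
    finally show "\<exists>\<gamma> \<in> hom C (cat_cod C c') (cat_cod C c'). cat_comp C c' h = cat_comp C \<gamma> c'"
      using b homD[OF c'] by metis
  qed
  show ?thesis using sec epi inv unfolding fully_coinvariant_def by blast
qed

lemma F_hom: "is_functor A B Fo Fm \<Longrightarrow> is_category A \<Longrightarrow> f \<in> hom A a b \<Longrightarrow> Fm f \<in> hom B (Fo a) (Fo b)"
  using cat_hom_obj[of A f a b] unfolding is_functor_def by blast

lemma F_comp: "is_functor A B Fo Fm \<Longrightarrow> is_category A \<Longrightarrow> f \<in> hom A a b \<Longrightarrow> g \<in> hom A b c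
   \<Longrightarrow> Fm (cat_comp A g f) = cat_comp B (Fm g) (Fm f)"
  using cat_hom_obj[of A f a b] cat_hom_obj[of A g b c] unfolding is_functor_def by blast

lemma F_id: "is_functor A B Fo Fm \<Longrightarrow> a \<in> cat_obj A \<Longrightarrow> Fm (cat_id A a) = cat_id B (Fo a)"
  unfolding is_functor_def by blast

lemma FF_surj: "fully_faithful A B Fo Fm \<Longrightarrow> a \<in> cat_obj A \<Longrightarrow> b \<in> cat_obj A \<Longrightarrow>
   g \<in> hom B (Fo a) (Fo b) \<Longrightarrow> \<exists>f \<in> hom A a b. Fm f = g"
  unfolding fully_faithful_def bij_betw_def by (metis imageE)

lemma FF_inj: "fully_faithful A B Fo Fm \<Longrightarrow> a \<in> cat_obj A \<Longrightarrow> b \<in> cat_obj A \<Longrightarrow>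
   f \<in> hom A a b \<Longrightarrow> g \<in> hom A a b \<Longrightarrow> Fm f = Fm g \<Longrightarrow> f = g"
  unfolding fully_faithful_def bij_betw_def inj_on_def by blast

lemma FF_ker:
  assumes A: "is_category A" and B: "is_category B" and F: "is_functor A B Fo Fm"
    and FF: "fully_faithful A B Fo Fm" and k: "k \<in> hom A K X"
  shows "(fully_invariant A k \<and> is_section A k) \<longleftrightarrow> (fully_invariant B (Fm k) \<and> is_section B (Fm k))"
proof -
  have oK: "K \<in> cat_obj A" and oX: "X \<in> cat_obj A" using cat_hom_obj[OF A k] by auto
  have Fk: "Fm k \<in> hom B (Fo K) (Fo X)" using F_hom[OF F A k] .
  note kd = homD[OF k] and Fkd = homD[OF Fk]
  show ?thesis
  proof
    assume h: "fully_invariant A k \<and> is_section A k"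
    then obtain r where r: "r \<in> hom A X K" and rk: "cat_comp A r k = cat_id A K"
      using kd unfolding is_section_def by auto
    have "cat_comp B (Fm r) (Fm k) = cat_id B (Fo K)"
      using F_comp[OF F A k r] rk F_id[OF F oK] by simp
    hence sec: "is_section B (Fm k)" unfolding is_section_def using F_hom[OF F A r] Fkd by auto
    have inv: "\<forall>h \<in> hom B (cat_cod B (Fm k)) (cat_cod B (Fm k)).
        \<exists>\<alpha> \<in> hom B (cat_dom B (Fm k)) (cat_dom B (Fm k)). cat_comp B h (Fm k) = cat_comp B (Fm k) \<alpha>"
    proof
      fix h' assume "h' \<in> hom B (cat_cod B (Fm k)) (cat_cod B (Fm k))"
      then obtain g where g: "g \<in> hom A X X" and gh: "Fm g = h'" using FF_surj[OF FF oX oX] Fkd by auto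
      obtain \<alpha> where a: "\<alpha> \<in> hom A K K" and ga: "cat_comp A g k = cat_comp A k \<alpha>"
        using h g kd unfolding fully_invariant_def by auto
      have "cat_comp B h' (Fm k) = cat_comp B (Fm k) (Fm \<alpha>)"
        using F_comp[OF F A k g] F_comp[OF F A a k] ga gh by simp
      thus "\<exists>\<alpha> \<in> hom B (cat_dom B (Fm k)) (cat_dom B (Fm k)). cat_comp B h' (Fm k) = cat_comp B (Fm k) \<alpha>"
        using F_hom[OF F A a] Fkd by auto
    qed
    show "fully_invariant B (Fm k) \<and> is_section B (Fm k)"
      using sec inv section_mono[OF B sec] unfolding fully_invariant_def by blast
  next
    assume h: "fully_invariant B (Fm k) \<and> is_section B (Fm k)"
    then obtain r' where r': "r' \<in> hom B (Fo X) (Fo K)" and rk: "cat_comp B r' (Fm k) = cat_id B (Fo K)"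
      using Fkd unfolding is_section_def by auto
    obtain r where r: "r \<in> hom A X K" and rr: "Fm r = r'" using FF_surj[OF FF oX oK r'] by auto
    have "Fm (cat_comp A r k) = Fm (cat_id A K)" using F_comp[OF F A k r] rr rk F_id[OF F oK] by simp
    hence "cat_comp A r k = cat_id A K"
      using FF_inj[OF FF oK oK cat_comp_hom[OF A k r] cat_id_hom[OF A oK]] by simp
    hence sec: "is_section A k" unfolding is_section_def using r kd by auto
    have inv: "\<forall>h \<in> hom A (cat_cod A k) (cat_cod A k).
        \<exists>\<alpha> \<in> hom A (cat_dom A k) (cat_dom A k). cat_comp A h k = cat_comp A k \<alpha>"
    proof
      fix g assume "g \<in> hom A (cat_cod A k) (cat_cod A k)"
      hence g: "g \<in> hom A X X" using kd by simp
      obtain \<alpha>' where a': "\<alpha>' \<in> hom B (Fo K) (Fo K)" and ga: "cat_comp B (Fm g) (Fm k) = cat_comp B (Fm k) \<alpha>'"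
        using h F_hom[OF F A g] Fkd unfolding fully_invariant_def by auto
      obtain \<alpha> where a: "\<alpha> \<in> hom A K K" and aa: "Fm \<alpha> = \<alpha>'" using FF_surj[OF FF oK oK a'] by auto
      have "Fm (cat_comp A g k) = Fm (cat_comp A k \<alpha>)"
        using F_comp[OF F A k g] F_comp[OF F A a k] ga aa by simp
      hence "cat_comp A g k = cat_comp A k \<alpha>"
        using FF_inj[OF FF oK oX cat_comp_hom[OF A k g] cat_comp_hom[OF A a k]] by simp
      thus "\<exists>\<alpha> \<in> hom A (cat_dom A k) (cat_dom A k). cat_comp A g k = cat_comp A k \<alpha>"
        using a kd by auto
    qed
    show "fully_invariant A k \<and> is_section A k"
      using sec inv section_mono[OF A sec] unfolding fully_invariant_def by blast
  qed
qed

lemma FF_coker: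
  assumes A: "is_category A" and B: "is_category B" and F: "is_functor A B Fo Fm"
    and FF: "fully_faithful A B Fo Fm" and c: "c \<in> hom A X Q"
  shows "(fully_coinvariant A c \<and> is_retraction A c) \<longleftrightarrow> (fully_coinvariant B (Fm c) \<and> is_retraction B (Fm c))"
proof -
  have oQ: "Q \<in> cat_obj A" and oX: "X \<in> cat_obj A" using cat_hom_obj[OF A c] by auto
  have Fc: "Fm c \<in> hom B (Fo X) (Fo Q)" using F_hom[OF F A c] .
  note cd = homD[OF c] and Fcd = homD[OF Fc]
  show ?thesis
  proof
    assume h: "fully_coinvariant A c \<and> is_retraction A c"
    then obtain r where r: "r \<in> hom A Q X" and rc: "cat_comp A c r = cat_id A Q"
      using cd unfolding is_retraction_def by auto
    have "cat_comp B (Fm c) (Fm r) = cat_id B (Fo Q)"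
      using F_comp[OF F A r c] rc F_id[OF F oQ] by simp
    hence sec: "is_retraction B (Fm c)" unfolding is_retraction_def using F_hom[OF F A r] Fcd by auto
    have inv: "\<forall>h \<in> hom B (cat_dom B (Fm c)) (cat_dom B (Fm c)).
        \<exists>\<gamma> \<in> hom B (cat_cod B (Fm c)) (cat_cod B (Fm c)). cat_comp B (Fm c) h = cat_comp B \<gamma> (Fm c)"
    proof
      fix h' assume "h' \<in> hom B (cat_dom B (Fm c)) (cat_dom B (Fm c))"
      then obtain g where g: "g \<in> hom A X X" and gh: "Fm g = h'" using FF_surj[OF FF oX oX] Fcd by auto
      obtain \<gamma> where a: "\<gamma> \<in> hom A Q Q" and ga: "cat_comp A c g = cat_comp A \<gamma> c"
        using h g cd unfolding fully_coinvariant_def by auto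
      have "cat_comp B (Fm c) h' = cat_comp B (Fm \<gamma>) (Fm c)"
        using F_comp[OF F A g c] F_comp[OF F A c a] ga gh by simp
      thus "\<exists>\<gamma> \<in> hom B (cat_cod B (Fm c)) (cat_cod B (Fm c)). cat_comp B (Fm c) h' = cat_comp B \<gamma> (Fm c)"
        using F_hom[OF F A a] Fcd by auto
    qed
    show "fully_coinvariant B (Fm c) \<and> is_retraction B (Fm c)"
      using sec inv retraction_epi[OF B sec] unfolding fully_coinvariant_def by blast
  next
    assume h: "fully_coinvariant B (Fm c) \<and> is_retraction B (Fm c)"
    then obtain r' where r': "r' \<in> hom B (Fo Q) (Fo X)" and rc: "cat_comp B (Fm c) r' = cat_id B (Fo Q)"
      using Fcd unfolding is_retraction_def by auto
    obtain r where r: "r \<in> hom A Q X" and rr: "Fm r = r'" using FF_surj[OF FF oQ oX r'] by auto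
    have "Fm (cat_comp A c r) = Fm (cat_id A Q)" using F_comp[OF F A r c] rr rc F_id[OF F oQ] by simp
    hence "cat_comp A c r = cat_id A Q"
      using FF_inj[OF FF oQ oQ cat_comp_hom[OF A r c] cat_id_hom[OF A oQ]] by simp
    hence sec: "is_retraction A c" unfolding is_retraction_def using r cd by auto
    have inv: "\<forall>h \<in> hom A (cat_dom A c) (cat_dom A c).
        \<exists>\<gamma> \<in> hom A (cat_cod A c) (cat_cod A c). cat_comp A c h = cat_comp A \<gamma> c"
    proof
      fix g assume "g \<in> hom A (cat_dom A c) (cat_dom A c)"
      hence g: "g \<in> hom A X X" using cd by simp
      obtain \<gamma>' where a': "\<gamma>' \<in> hom B (Fo Q) (Fo Q)" and ga: "cat_comp B (Fm c) (Fm g) = cat_comp B \<gamma>' (Fm c)"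
        using h F_hom[OF F A g] Fcd unfolding fully_coinvariant_def by auto
      obtain \<gamma> where a: "\<gamma> \<in> hom A Q Q" and aa: "Fm \<gamma> = \<gamma>'" using FF_surj[OF FF oQ oQ a'] by auto
      have "Fm (cat_comp A c g) = Fm (cat_comp A \<gamma> c)"
        using F_comp[OF F A g c] F_comp[OF F A c a] ga aa by simp
      hence "cat_comp A c g = cat_comp A \<gamma> c"
        using FF_inj[OF FF oX oQ cat_comp_hom[OF A g c] cat_comp_hom[OF A c a]] by simp
      thus "\<exists>\<gamma> \<in> hom A (cat_cod A c) (cat_cod A c). cat_comp A c g = cat_comp A \<gamma> c"
        using a cd by auto
    qed
    show "fully_coinvariant A c \<and> is_retraction A c"
      using sec inv retraction_epi[OF A sec] unfolding fully_coinvariant_def by blast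
  qed
qed

lemma part1:
  assumes Aa: "is_abelian A" and Ba: "is_abelian B" and F: "is_functor A B Fo Fm"
    and FF: "fully_faithful A B Fo Fm" and M: "M \<in> cat_obj A" and N: "N \<in> cat_obj A"
    and LE: "left_exact A B Fo Fm"
  shows "strongly_rickart A M N \<longleftrightarrow> strongly_rickart B (Fo M) (Fo N)"
proof -
  have A: "is_category A" and B: "is_category B" using Aa Ba abelian_cat by auto
  show ?thesis
  proof
    assume SA: "strongly_rickart A M N"
    show "strongly_rickart B (Fo M) (Fo N)" unfolding strongly_rickart_def
    proof (intro ballI allI impI)
      fix g k' assume g: "g \<in> hom B (Fo M) (Fo N)" and k': "is_kernel B g k'"
      obtain f where f: "f \<in> hom A M N" and fg: "Fm f = g" using FF_surj[OF FF M N g] by auto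
      obtain k where k: "is_kernel A f k" using Aa homD[OF f] unfolding is_abelian_def by blast
      have kh: "k \<in> hom A (cat_dom A k) M" using k homD[OF f] unfolding is_kernel_def hom_def by auto
      have P: "fully_invariant A k \<and> is_section A k" using SA f k unfolding strongly_rickart_def by blast
      have PB: "fully_invariant B (Fm k) \<and> is_section B (Fm k)" using FF_ker[OF A B F FF kh] P by blast
      have Fk: "is_kernel B g (Fm k)" using LE k fg unfolding left_exact_def by blast
      have Fkh: "Fm k \<in> hom B (Fo (cat_dom A k)) (Fo M)" using F_hom[OF F A kh] .
      have k'h: "k' \<in> hom B (cat_dom B k') (Fo M)" using k' homD[OF g] unfolding is_kernel_def hom_def by auto
      obtain u v where uv: "u \<in> hom B (cat_dom B k') (cat_dom B (Fm k))" "v \<in> hom B (cat_dom B (Fm k)) (cat_dom B k')"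
        "cat_comp B (Fm k) u = k'" "cat_comp B k' v = Fm k" "cat_comp B v u = cat_id B (cat_dom B k')"
        using kernel_iso[OF B Fk k'] by blast
      show "fully_invariant B k' \<and> is_section B k'"
        using FI_iso[OF B _ _ Fkh k'h _ _ uv(3,4,5)] PB uv(1,2) homD[OF Fkh] by auto
    qed
  next
    assume SB: "strongly_rickart B (Fo M) (Fo N)"
    show "strongly_rickart A M N" unfolding strongly_rickart_def
    proof (intro ballI allI impI)
      fix f k assume f: "f \<in> hom A M N" and k: "is_kernel A f k"
      have kh: "k \<in> hom A (cat_dom A k) M" using k homD[OF f] unfolding is_kernel_def hom_def by auto
      have Fk: "is_kernel B (Fm f) (Fm k)" using LE k unfolding left_exact_def by blast
      have "fully_invariant B (Fm k) \<and> is_section B (Fm k)"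
        using SB F_hom[OF F A f] Fk unfolding strongly_rickart_def by blast
      thus "fully_invariant A k \<and> is_section A k" using FF_ker[OF A B F FF kh] by blast
    qed
  qed
qed

lemma part2:
  assumes Aa: "is_abelian A" and Ba: "is_abelian B" and F: "is_functor A B Fo Fm"
    and FF: "fully_faithful A B Fo Fm" and M: "M \<in> cat_obj A" and N: "N \<in> cat_obj A"
    and RE: "right_exact A B Fo Fm"
  shows "dual_strongly_rickart A M N \<longleftrightarrow> dual_strongly_rickart B (Fo M) (Fo N)"
proof -
  have A: "is_category A" and B: "is_category B" using Aa Ba abelian_cat by auto
  show ?thesis
  proof
    assume SA: "dual_strongly_rickart A M N"
    show "dual_strongly_rickart B (Fo M) (Fo N)" unfolding dual_strongly_rickart_def
    proof (intro ballI allI impI)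
      fix g c' assume g: "g \<in> hom B (Fo M) (Fo N)" and c': "is_cokernel B g c'"
      obtain f where f: "f \<in> hom A M N" and fg: "Fm f = g" using FF_surj[OF FF M N g] by auto
      obtain c where c: "is_cokernel A f c" using Aa homD[OF f] unfolding is_abelian_def by blast
      have ch: "c \<in> hom A N (cat_cod A c)" using c homD[OF f] unfolding is_cokernel_def hom_def by auto
      have P: "fully_coinvariant A c \<and> is_retraction A c" using SA f c unfolding dual_strongly_rickart_def by blast
      have PB: "fully_coinvariant B (Fm c) \<and> is_retraction B (Fm c)" using FF_coker[OF A B F FF ch] P by blast
      have Fc: "is_cokernel B g (Fm c)" using RE c fg unfolding right_exact_def by blast
      have Fch: "Fm c \<in> hom B (Fo N) (Fo (cat_cod A c))" using F_hom[OF F A ch] .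
      have c'h: "c' \<in> hom B (Fo N) (cat_cod B c')" using c' homD[OF g] unfolding is_cokernel_def hom_def by auto
      obtain u v where uv: "u \<in> hom B (cat_cod B (Fm c)) (cat_cod B c')" "v \<in> hom B (cat_cod B c') (cat_cod B (Fm c))"
        "cat_comp B u (Fm c) = c'" "cat_comp B v c' = Fm c" "cat_comp B u v = cat_id B (cat_cod B c')"
        using cokernel_iso[OF B Fc c'] by blast
      show "fully_coinvariant B c' \<and> is_retraction B c'"
        using FC_iso[OF B _ _ Fch c'h _ _ uv(3,4,5)] PB uv(1,2) homD[OF Fch] by auto
    qed
  next
    assume SB: "dual_strongly_rickart B (Fo M) (Fo N)"
    show "dual_strongly_rickart A M N" unfolding dual_strongly_rickart_def
    proof (intro ballI allI impI)
      fix f c assume f: "f \<in> hom A M N" and c: "is_cokernel A f c"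
      have ch: "c \<in> hom A N (cat_cod A c)" using c homD[OF f] unfolding is_cokernel_def hom_def by auto
      have Fc: "is_cokernel B (Fm f) (Fm c)" using RE c unfolding right_exact_def by blast
      have "fully_coinvariant B (Fm c) \<and> is_retraction B (Fm c)"
        using SB F_hom[OF F A f] Fc unfolding dual_strongly_rickart_def by blast
      thus "fully_coinvariant A c \<and> is_retraction A c" using FF_coker[OF A B F FF ch] by blast
    qed
  qed
qed

theorem theorem4p1:
  fixes A :: "('o, 'm) cat" and B :: "('p, 'n) cat"
    and Fo :: "'o \<Rightarrow> 'p" and Fm :: "'m \<Rightarrow> 'n" and M N :: 'o
  assumes "is_abelian A" and "is_abelian B"
    and "is_additive_functor A B Fo Fm" and "fully_faithful A B Fo Fm"
    and "M \<in> cat_obj A" and "N \<in> cat_obj A"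
  shows "(left_exact A B Fo Fm \<longrightarrow>
            (strongly_rickart A M N \<longleftrightarrow> strongly_rickart B (Fo M) (Fo N))) \<and>
         (right_exact A B Fo Fm \<longrightarrow>
            (dual_strongly_rickart A M N \<longleftrightarrow> dual_strongly_rickart B (Fo M) (Fo N)))"
proof -
  have F: "is_functor A B Fo Fm" using assms(3) unfolding is_additive_functor_def by blast
  show ?thesis using part1[OF assms(1,2) F assms(4,5,6)] part2[OF assms(1,2) F assms(4,5,6)] by blast
qed

end
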